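(* Assume $S\times M\neq\emptyset$, let $(x,\lambda):[t_0,+\infty[\ \to X\times Y$ be a solution of (AHT), and suppose $\varepsilon$ is decreasing and there exists $t_+\ge t_0$ such that $\varepsilon^2(t)+\dot\varepsilon(t)\ge0$ and $2\varepsilon(t)\dot\varepsilon(t)+\ddot\varepsilon(t)\le0$ for all $t\ge t_+$. Then \[ \limsup_{t\to+\infty}e^{-\rho(t)}\int_{t_+}^t e^{\rho(\tau)}\frac{1}{\varepsilon(\tau)}\|(\dot x(\tau),\dot\lambda(\tau))\|^2\,d\tau<+\infty. \]
   Context: $X,Y$ are real Hilbert spaces; $X\times Y$ carries the product inner product and norm $\|\cdot\|$. Standing assumptions: $f:X\to\mathbb{R}$ is convex and continuously differentiable with $\nabla f$ Lipschitz continuous on bounded subsets of $X$; $A:X\to Y$ is linear and continuous with adjoint $A^*$; $b\in Y$; $\varepsilon:[t_0,+\infty[\ \to\ ]0,+\infty[$ ($t_0\ge0$) is twice continuously differentiable with $\lim_{t\to+\infty}\varepsilon(t)=0$. $L(x,\lambda)=f(x)+\langle\lambda,Ax-b\rangle_Y$. $S$ is the set of optimal solutions of $\min\{f(x):Ax=b\}$, $M$ the set of Lagrange multipliers; $S\times M$ is the set of saddle points of $L$. $\rho(t)=\int_{t_0}^t\varepsilon(\tau)\,d\tau$. (AHT) is the system $\dot x+\nabla f(x)+A^*\lambda+\varepsilon(t)x=0$, $\dot\lambda+b-Ax+\varepsilon(t)\lambda=0$; a solution is a continuously differentiable $(x,\lambda):[t_0,+\infty[\ \to X\times Y$ satisfying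 it on $[t_0,+\infty[$ (existence and uniqueness for every initial datum is assumed). *)

theory Defs
  imports "HOL-Analysis.Analysis"
begin

definition opt_set :: "('a::real_inner \<Rightarrow> real) \<Rightarrow> ('a \<Rightarrow> 'b::real_inner) \<Rightarrow> 'b \<Rightarrow> 'a set" where
  "opt_set f A b = {x. A x = b \<and> (\<forall>y. A y = b \<longrightarrow> f x \<le> f y)}"

definition mult_set :: "('a::real_inner \<Rightarrow> real) \<Rightarrow> ('a \<Rightarrow> 'a) \<Rightarrow> ('a \<Rightarrow> 'b::real_inner) \<Rightarrow> ('b \<Rightarrow> 'a) \<Rightarrow> 'b \<Rightarrow> 'b set" where
  "mult_set f gf A Astar b = {lam. \<exists>x \<in> opt_set f A b. gf x + Astar lam = 0}"

definition rho :: "(real \<Rightarrow> real) \<Rightarrow> real \<Rightarrow> real \<Rightarrow> real" where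
  "rho eps t0 t = integral {t0..t} eps"

end

theory Submission imports Defs begin


lemma deriv_nonpos_le:
  fixes G :: "real \<Rightarrow> real"
  assumes "a \<le> b"
    and "\<And>s. a \<le> s \<Longrightarrow> s \<le> b \<Longrightarrow> (G has_real_derivative G' s) (at s within {a..b})"
    and "\<And>s. a \<le> s \<Longrightarrow> s \<le> b \<Longrightarrow> G' s \<le> 0"
  shows "G b \<le> G a"
proof -
  have "\<exists>s\<in>{a..b}. G b - G a = (\<lambda>h. G' s * h) (b - a)"
    using mvt_very_simple[of a b G "\<lambda>s h. G' s * h"] assms(1,2)
    unfolding has_field_derivative_def by blast
  then obtain s where s: "s \<in> {a..b}" "G b - G a = G' s * (b - a)" by auto
  have "G' s * (b - a) \<le> 0" using assms(1) assms(3)[of s] s(1)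
    by (simp add: mult_nonpos_nonneg)
  then show ?thesis using s by simp
qed

lemma grad_ineq:
  fixes f :: "'a::real_inner \<Rightarrow> real"
  assumes cvx: "convex_on UNIV f"
    and d: "\<And>u. (f has_derivative (\<lambda>h. inner (gf u) h)) (at u)"
  shows "f y - f x \<ge> inner (gf x) (y - x)"
proof -
  define g where "g s = f (x + s *\<^sub>R (y - x))" for s :: real
  have gc: "convex_on UNIV g"
  proof (rule convex_onI)
    fix t u v :: real
    assume "t > 0" "t < 1"
    have e: "x + ((1 - t) *\<^sub>R u + t *\<^sub>R v) *\<^sub>R (y - x) = (1 - t) *\<^sub>R (x + u *\<^sub>R (y - x)) + t *\<^sub>R (x + v *\<^sub>R (y - x))"
      by (simp add: algebra_simps)
    show "g ((1 - t) *\<^sub>R u + t *\<^sub>R v) \<le> (1 - t) * g u + t * g v"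
      unfolding g_def e using convex_onD[OF cvx, of t] \<open>t > 0\<close> \<open>t < 1\<close> by simp
  qed simp
  have gd: "(g has_field_derivative inner (gf x) (y - x)) (at 0)"
  proof -
    have "((\<lambda>s. f (x + s *\<^sub>R (y - x))) has_derivative (\<lambda>h. inner (gf (x + 0 *\<^sub>R (y - x))) (h *\<^sub>R (y - x)))) (at 0)"
      by (rule diff_chain_at[of "\<lambda>s. x + s *\<^sub>R (y - x)" "\<lambda>h. h *\<^sub>R (y - x)", unfolded o_def, OF _ d])
         (auto intro!: derivative_eq_intros)
    moreover have "(\<lambda>h. h * inner (gf x) (y - x)) = (*) (inner (gf x) (y - x))" by (auto simp: fun_eq_iff)
    ultimately show ?thesis unfolding g_def has_field_derivative_def
      by simp
  qed
  have "g 1 - g 0 \<ge> inner (gf x) (y - x) * (1 - 0)"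
    by (rule convex_on_imp_above_tangent[OF gc]) (auto simp: gd)
  then show ?thesis by (simp add: g_def)
qed



lemma vd_quot:
  fixes f :: "real \<Rightarrow> 'a::real_normed_vector"
  assumes "(f has_vector_derivative f') (at t within {t..u})" "t < u"
  shows "((\<lambda>h. (f (t+h) - f t) /\<^sub>R h) \<longlongrightarrow> f') (at_right 0)"
proof -
  from assms have L: "((\<lambda>y. (1 / norm(y - t)) *\<^sub>R (f y - (f t + (y - t) *\<^sub>R f'))) \<longlongrightarrow> 0) (at_right t)"
    unfolding has_vector_derivative_def has_derivative_within at_within_Icc_at_right[OF assms(2)] by blast
  then have L2: "((\<lambda>h. (1 / norm h) *\<^sub>R (f (h + t) - (f t + h *\<^sub>R f'))) \<longlongrightarrow> 0) (at_right 0)"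
    unfolding filterlim_at_right_to_0[of _ _ t] by simp
  have "((\<lambda>h. (1 / norm h) *\<^sub>R (f (h + t) - (f t + h *\<^sub>R f')) + f') \<longlongrightarrow> 0 + f') (at_right 0)"
    by (intro tendsto_add L2 tendsto_const)
  then have L3: "((\<lambda>h. (1 / norm h) *\<^sub>R (f (h + t) - (f t + h *\<^sub>R f')) + f') \<longlongrightarrow> f') (at_right 0)"
    by simp
  show ?thesis
  proof (rule Lim_transform_eventually[OF L3])
    show "\<forall>\<^sub>F h in at_right 0. (1 / norm h) *\<^sub>R (f (h + t) - (f t + h *\<^sub>R f')) + f' = (f (t + h) - f t) /\<^sub>R h"
      by (rule eventually_at_rightI[of 0 1]) (auto simp: algebra_simps divide_simps)
  qed
qed

lemma rd_quot:
  fixes f :: "real \<Rightarrow> real"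
  assumes "(f has_real_derivative f') (at t within {t..u})" "t < u"
  shows "((\<lambda>h. (f (t+h) - f t) / h) \<longlongrightarrow> f') (at_right 0)"
  using vd_quot[of f f' t u] assms
  by (simp add: has_real_derivative_iff_has_vector_derivative divide_inverse_commute)

lemma vd_cont_right:
  fixes f :: "real \<Rightarrow> 'a::real_normed_vector"
  assumes "(f has_vector_derivative f') (at t within {t..u})" "t < u"
  shows "((\<lambda>h. f (t+h)) \<longlongrightarrow> f t) (at_right 0)"
proof -
  have "continuous (at_right t) f"
    using has_vector_derivative_continuous[OF assms(1)] at_within_Icc_at_right[OF assms(2)] by simp
  then have "(f \<longlongrightarrow> f t) (at_right t)" by (simp add: continuous_within)
  then show ?thesis unfolding filterlim_at_right_to_0[of _ _ t] by (simp add: add.commute)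
qed

lemma shift_vd:
  fixes g :: "real \<Rightarrow> 'a::real_normed_vector"
  assumes "(g has_vector_derivative g') (at (s+h) within S)" "(\<lambda>s. s+h) ` T \<subseteq> S"
  shows "((\<lambda>s. g (s+h)) has_vector_derivative g') (at s within T)"
proof -
  have d1: "((\<lambda>s. s+h) has_vector_derivative 1) (at s within T)"
    by (auto intro!: derivative_eq_intros)
  have "((g \<circ> (\<lambda>s. s+h)) has_vector_derivative (1 *\<^sub>R g')) (at s within T)"
    by (rule vector_diff_chain_within[OF d1]) (use has_vector_derivative_within_subset[OF assms(1,2)] in simp)
  then show ?thesis by (simp add: o_def)
qed

lemma shift_rd:
  fixes g :: "real \<Rightarrow> real"
  assumes "(g has_real_derivative g') (at (s+h) within S)" "(\<lambda>s. s+h) ` T \<subseteq> S"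
  shows "((\<lambda>s. g (s+h)) has_real_derivative g') (at s within T)"
  using shift_vd[of g g' s h S T] assms by (simp add: has_real_derivative_iff_has_vector_derivative)

lemma mvt_bounds:
  fixes G :: "real \<Rightarrow> real"
  assumes "a \<le> b"
    and "\<And>s. a \<le> s \<Longrightarrow> s \<le> b \<Longrightarrow> (G has_real_derivative G' s) (at s within {a..b})"
    and "\<And>s. a \<le> s \<Longrightarrow> s \<le> b \<Longrightarrow> lo \<le> G' s \<and> G' s \<le> hi"
  shows "lo * (b - a) \<le> G b - G a \<and> G b - G a \<le> hi * (b - a)"
proof -
  have "\<exists>s\<in>{a..b}. G b - G a = (\<lambda>h. G' s * h) (b - a)"
    using mvt_very_simple[of a b G "\<lambda>s h. G' s * h"] assms(1,2)
    unfolding has_field_derivative_def by blast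
  then obtain s where s: "s \<in> {a..b}" "G b - G a = G' s * (b - a)" by auto
  have "lo * (b - a) \<le> G' s * (b - a)" "G' s * (b - a) \<le> hi * (b - a)"
    using assms(1) assms(3)[of s] s(1) by (auto intro: mult_right_mono)
  then show ?thesis using s by simp
qed


lemma inner_self_vd:
  fixes g :: "real \<Rightarrow> 'a::real_inner"
  assumes "(g has_vector_derivative g') (at s within S)"
  shows "((\<lambda>s. inner (g s) (g s) / 2) has_real_derivative inner g' (g s)) (at s within S)"
proof -
  have d: "(g has_derivative (\<lambda>h. h *\<^sub>R g')) (at s within S)"
    using assms by (simp add: has_vector_derivative_def)
  have "((\<lambda>s. inner (g s) (g s) / 2) has_derivative (\<lambda>h. (inner (g s) (h *\<^sub>R g') + inner (h *\<^sub>R g') (g s)) / 2)) (at s within S)"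
  proof -
    have "((\<lambda>s. inner (g s) (g s)) has_derivative (\<lambda>h. inner (g s) (h *\<^sub>R g') + inner (h *\<^sub>R g') (g s))) (at s within S)"
      by (rule has_derivative_inner[OF d d])
    from has_derivative_mult_left[OF this, of "1/2"] show ?thesis by simp
  qed
  moreover have "(\<lambda>h. (inner (g s) (h *\<^sub>R g') + inner (h *\<^sub>R g') (g s)) / 2) = (*) (inner g' (g s))"
    by (auto simp: fun_eq_iff inner_commute)
  ultimately show ?thesis by (simp add: has_field_derivative_def)
qed

lemma exp_rd:
  "(g has_real_derivative m) (at s within S) \<Longrightarrow> ((\<lambda>s. exp (g s)) has_real_derivative exp (g s) * m) (at s within S)"
  by (rule DERIV_chain2[OF DERIV_exp])

lemma mvt_lower:
  fixes G :: "real \<Rightarrow> real"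
  assumes "a \<le> b"
    and "\<And>s. a \<le> s \<Longrightarrow> s \<le> b \<Longrightarrow> (G has_real_derivative G' s) (at s within {a..b})"
    and "\<And>s. a \<le> s \<Longrightarrow> s \<le> b \<Longrightarrow> lo \<le> G' s"
  shows "lo * (b - a) \<le> G b - G a"
proof -
  have "(\<lambda>u. lo * u - G u) b \<le> (\<lambda>u. lo * u - G u) a"
  proof (rule deriv_nonpos_le[OF assms(1)])
    fix s assume s: "a \<le> s" "s \<le> b"
    show "((\<lambda>u. lo * u - G u) has_real_derivative lo - G' s) (at s within {a..b})"
      by (rule DERIV_cong, rule DERIV_diff[OF DERIV_cmult[OF DERIV_ident] assms(2)[OF s]]) simp
    show "lo - G' s \<le> 0" using assms(3)[OF s] by simp
  qed
  then show ?thesis by (simp add: algebra_simps)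
qed
theorem proposition4p3:
  fixes f :: "'a::{real_inner,complete_space} \<Rightarrow> real"
    and gf :: "'a \<Rightarrow> 'a"
    and A :: "'a \<Rightarrow> 'b::{real_inner,complete_space}"
    and Astar :: "'b \<Rightarrow> 'a"
    and b :: 'b
    and eps eps' eps'' :: "real \<Rightarrow> real"
    and t0 tp :: real
    and x x' :: "real \<Rightarrow> 'a"
    and lam lam' :: "real \<Rightarrow> 'b"
  assumes f_convex: "convex_on UNIV f"
    and f_grad: "\<And>u. (f has_derivative (\<lambda>h. inner (gf u) h)) (at u)"
    and gf_cont: "continuous_on UNIV gf"
    and gf_lip: "\<And>B. bounded B \<Longrightarrow> \<exists>K. \<forall>u\<in>B. \<forall>v\<in>B. norm (gf u - gf v) \<le> K * norm (u - v)"
    and A_lin: "bounded_linear A"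
    and A_adj: "\<And>u v. inner (A u) v = inner u (Astar v)"
    and t0_nonneg: "t0 \<ge> 0"
    and eps_pos: "\<And>t. t \<ge> t0 \<Longrightarrow> eps t > 0"
    and eps_d1: "\<And>t. t \<ge> t0 \<Longrightarrow> (eps has_real_derivative eps' t) (at t within {t0..})"
    and eps_d2: "\<And>t. t \<ge> t0 \<Longrightarrow> (eps' has_real_derivative eps'' t) (at t within {t0..})"
    and eps_C2: "continuous_on {t0..} eps''"
    and eps_lim: "(eps \<longlongrightarrow> 0) at_top"
    and SM_ne: "opt_set f A b \<times> mult_set f gf A Astar b \<noteq> {}"
    and x_deriv: "\<And>t. t \<ge> t0 \<Longrightarrow> (x has_vector_derivative x' t) (at t within {t0..})"
    and lam_deriv: "\<And>t. t \<ge> t0 \<Longrightarrow> (lam has_vector_derivative lam' t) (at t within {t0..})"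
    and x'_cont: "continuous_on {t0..} x'"
    and lam'_cont: "continuous_on {t0..} lam'"
    and eq_x: "\<And>t. t \<ge> t0 \<Longrightarrow> x' t + gf (x t) + Astar (lam t) + eps t *\<^sub>R x t = 0"
    and eq_lam: "\<And>t. t \<ge> t0 \<Longrightarrow> lam' t + b - A (x t) + eps t *\<^sub>R lam t = 0"
    and eps_decr: "\<And>s t. t0 \<le> s \<Longrightarrow> s \<le> t \<Longrightarrow> eps t \<le> eps s"
    and tp_ge: "tp \<ge> t0"
    and cond1: "\<And>t. t \<ge> tp \<Longrightarrow> (eps t)\<^sup>2 + eps' t \<ge> 0"
    and cond2: "\<And>t. t \<ge> tp \<Longrightarrow> 2 * eps t * eps' t + eps'' t \<le> 0"
  shows "Limsup at_top (\<lambda>t::real. ereal (exp (- rho eps t0 t) *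
            integral {tp..t} (\<lambda>\<tau>. exp (rho eps t0 \<tau>) * (1 / eps \<tau>) * (norm (x' \<tau>, lam' \<tau>))\<^sup>2)))
         < \<infinity>"
  proof -
  define z where "z t = (x t, lam t)" for t
  define z' where "z' t = (x' t, lam' t)" for t
  define F where "F u = (gf (fst u) + Astar (snd u), b - A (fst u))" for u :: "'a \<times> 'b"
  define r where "r = rho eps t0"
  define p where "p s = inner (z s) (z s) / 2" for s
  define P where "P s = integral {t0..s} p" for s
  have zd: "\<And>t. t \<ge> t0 \<Longrightarrow> (z has_vector_derivative z' t) (at t within {t0..})"
    unfolding z_def z'_def by (intro has_vector_derivative_Pair x_deriv lam_deriv)
  have zeq: "z' t = - F (z t) - eps t *\<^sub>R z t" if "t \<ge> t0" for t
  proof -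
    have 1: "x' t = - (gf (x t) + Astar (lam t) + eps t *\<^sub>R x t)"
      using eq_x[OF that] by (simp only: eq_neg_iff_add_eq_0 add.assoc)
    have 2: "lam' t = - (b - A (x t) + eps t *\<^sub>R lam t)"
      proof -
      have "lam' t + (b - A (x t) + eps t *\<^sub>R lam t) = 0" using eq_lam[OF that] by (simp add: algebra_simps)
      then show ?thesis by (simp only: eq_neg_iff_add_eq_0)
    qed
    show ?thesis unfolding z_def z'_def F_def using 1 2 by (simp add: algebra_simps)
  qed
  have Adiff: "A u - A v = A (u - v)" for u v
    using A_lin by (simp add: linear_diff bounded_linear.linear)
  have mono: "0 \<le> inner (F u - F v) (u - v)" for u v
  proof -
    obtain u1 u2 v1 v2 where uv: "u = (u1, u2)" "v = (v1, v2)" by (cases u, cases v) auto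
    have g: "0 \<le> inner (gf u1 - gf v1) (u1 - v1)"
      using grad_ineq[OF f_convex f_grad, of u1 v1] grad_ineq[OF f_convex f_grad, of v1 u1]
      by (simp add: inner_diff_left inner_diff_right inner_commute)
    have a: "inner (Astar u2 - Astar v2) (u1 - v1) = inner (A (u1 - v1)) (u2 - v2)"
    proof -
      have AA: "inner (Astar w) q = inner (A q) w" for w q by (metis A_adj inner_commute)
      show ?thesis by (simp add: inner_diff_left inner_diff_right AA Adiff[symmetric])
    qed
    have "inner (F u - F v) (u - v) = inner (gf u1 - gf v1) (u1 - v1) + inner (Astar u2 - Astar v2) (u1 - v1)
       - inner (A u1 - A v1) (u2 - v2)"
      unfolding uv F_def by (simp add: inner_diff_left inner_add_left algebra_simps)
    then show ?thesis using g a Adiff by simp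
  qed
  have eps_cont: "continuous_on {t0..} eps"
    using eps_d1 DERIV_continuous continuous_on_eq_continuous_within by (metis atLeast_iff)
  have eps'_cont: "continuous_on {t0..} eps'"
    using eps_d2 DERIV_continuous continuous_on_eq_continuous_within by (metis atLeast_iff)
  have z_cont: "continuous_on {t0..} z"
    using zd has_vector_derivative_continuous continuous_on_eq_continuous_within by (metis atLeast_iff)
  have p_cont: "continuous_on {t0..} p" unfolding p_def by (intro continuous_intros z_cont) auto
  have r_eq: "r = (\<lambda>t. integral {t0..t} eps)" by (simp add: r_def rho_def[abs_def])
  have P_eq: "P = (\<lambda>t. integral {t0..t} p)" by (simp add: P_def[abs_def])
  have rd: "(r has_real_derivative eps s) (at s within S)" if "t0 \<le> s" "s \<le> c" "S \<subseteq> {t0..c}" for s c S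
    unfolding r_eq
    by (rule DERIV_subset[OF integral_has_real_derivative[OF continuous_on_subset[OF eps_cont]] that(3)])
       (use that in auto)
  have Pd: "(P has_real_derivative p s) (at s within S)" if "t0 \<le> s" "s \<le> c" "S \<subseteq> {t0..c}" for s c S
    unfolding P_eq
    by (rule DERIV_subset[OF integral_has_real_derivative[OF continuous_on_subset[OF p_cont]] that(3)])
       (use that in auto)
  have epsd: "(eps has_real_derivative eps' s) (at s within S)" if "t0 \<le> s" "S \<subseteq> {t0..}" for s S
    using DERIV_subset[OF eps_d1 that(2)] that(1) by simp
  have eps'd: "(eps' has_real_derivative eps'' s) (at s within S)" if "t0 \<le> s" "S \<subseteq> {t0..}" for s S
    using DERIV_subset[OF eps_d2 that(2)] that(1) by simp
  have zdS: "(z has_vector_derivative z' s) (at s within S)" if "t0 \<le> s" "S \<subseteq> {t0..}" for s S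
    using has_vector_derivative_within_subset[OF zd that(2)] that(1) by simp
  have r0: "r t0 = 0" by (simp add: r_eq)
  have r_mono: "r s \<le> r t" if "t0 \<le> s" "s \<le> t" for s t
  proof -
    have "(\<lambda>u. - r u) t \<le> (\<lambda>u. - r u) s"
    proof (rule deriv_nonpos_le[OF that(2)])
      fix u assume "s \<le> u" "u \<le> t"
      show "((\<lambda>u. - r u) has_real_derivative - eps u) (at u within {s..t})"
        by (intro derivative_intros rd[of u t]) (use that \<open>s \<le> u\<close> \<open>u \<le> t\<close> in auto)
      show "- eps u \<le> 0" using eps_pos[of u] that \<open>s \<le> u\<close> by simp
    qed
    then show ?thesis by simp
  qed
  have r_nonneg: "r s \<ge> 0" if "t0 \<le> s" for s using r_mono[OF order_refl that] r0 by simp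
  obtain zs where zs: "F zs = 0"
  proof -
    from SM_ne obtain x1 l1 where "x1 \<in> opt_set f A b" "l1 \<in> mult_set f gf A Astar b" by auto
    then obtain xb where xb: "xb \<in> opt_set f A b" "gf xb + Astar l1 = 0" unfolding mult_set_def by auto
    then have "A xb = b" unfolding opt_set_def by auto
    then show ?thesis using xb by (intro that[of "(xb, l1)"]) (simp add: F_def zero_prod_def)
  qed
  define c where "c = inner zs zs / 2"
  define H where "H s = inner (z s - zs) (z s - zs) / 2" for s
  have Hbound: "H t \<le> c + \<bar>H t0 - c\<bar>" if "t \<ge> t0" for t
  proof -
    define G where "G s = exp (r s) * (H s - c)" for s
    have "G t \<le> G t0"
    proof (rule deriv_nonpos_le[OF that])
      fix s assume s: "t0 \<le> s" "s \<le> t"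
      have Hd: "(H has_real_derivative inner (z' s - 0) (z s - zs)) (at s within {t0..t})"
        unfolding H_def
        by (intro inner_self_vd derivative_intros zdS) (use s in auto)
      have ed: "((\<lambda>s. exp (r s)) has_real_derivative exp (r s) * eps s) (at s within {t0..t})"
        by (intro exp_rd rd[of s t]) (use s in auto)
      have "(G has_real_derivative (exp (r s) * eps s) * (H s - c) + (inner (z' s - 0) (z s - zs) - 0) * exp (r s)) (at s within {t0..t})"
        unfolding G_def by (intro DERIV_mult ed DERIV_diff Hd DERIV_const)
      then show "(G has_real_derivative (exp (r s) * (eps s * (H s - c) + inner (z' s) (z s - zs)))) (at s within {t0..t})"
        by (rule DERIV_cong) (simp add: algebra_simps)
      have "inner (z' s) (z s - zs) = - inner (F (z s) - F zs) (z s - zs) - eps s * inner (z s) (z s - zs)"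
        using zeq[OF s(1)] zs by (simp add: inner_diff_left inner_add_left)
      moreover have "inner (z s) (z s - zs) \<ge> H s - c"
      proof -
        have cs: "- inner zs (z s - zs) \<le> norm zs * norm (z s - zs)"
          using norm_cauchy_schwarz[of "- zs" "z s - zs"] by simp
        have "norm zs * norm (z s - zs) \<le> (norm zs ^ 2 + norm (z s - zs) ^ 2) / 2"
          using sum_squares_bound[of "norm zs" "norm (z s - zs)"] by simp
        moreover have "inner (z s) (z s - zs) = inner (z s - zs) (z s - zs) + inner zs (z s - zs)"
          by (simp add: inner_diff_left inner_diff_right)
        ultimately show ?thesis using cs unfolding H_def c_def by (simp add: power2_norm_eq_inner)
      qed
      ultimately have "eps s * (H s - c) + inner (z' s) (z s - zs) \<le> 0"
        using mono[of "z s" zs] eps_pos[OF s(1)] mult_left_mono[of "H s - c" "inner (z s) (z s - zs)" "eps s"]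
        by (simp add: algebra_simps)
      then show "exp (r s) * (eps s * (H s - c) + inner (z' s) (z s - zs)) \<le> 0"
        by (simp add: mult_nonneg_nonpos)
    qed
    then have "exp (r t) * (H t - c) \<le> H t0 - c" by (simp add: G_def r0)
    moreover have "exp (r t) \<ge> 1" using r_nonneg[OF that] by simp
    ultimately show ?thesis
      by (smt (verit, best) mult_le_cancel_right1 mult.commute)
  qed
  obtain B where B: "\<And>s. s \<ge> t0 \<Longrightarrow> norm (z s) \<le> B"
  proof -
    define R where "R = sqrt (2 * (c + \<bar>H t0 - c\<bar>))"
    have "norm (z s) \<le> norm zs + R" if "s \<ge> t0" for s
    proof -
      have "norm (z s - zs) ^ 2 \<le> 2 * (c + \<bar>H t0 - c\<bar>)"
        using Hbound[OF that] unfolding H_def by (simp add: power2_norm_eq_inner)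
      then have "norm (z s - zs) \<le> R" unfolding R_def by (simp add: real_le_rsqrt)
      moreover have "norm (z s) \<le> norm zs + norm (z s - zs)"
        using norm_triangle_ineq[of zs "z s - zs"] by simp
      ultimately show ?thesis by simp
    qed
    then show ?thesis by (rule that)
  qed
  have B0: "B \<ge> 0" using B[of t0] norm_ge_zero[of "z t0"] by linarith
  have p_nonneg: "p s \<ge> 0" for s unfolding p_def by simp
  have p_le: "p s \<le> B ^ 2 / 2" if "s \<ge> t0" for s
  proof -
    have "norm (z s) ^ 2 \<le> B ^ 2" using B[OF that] by (simp add: power_mono)
    then show ?thesis unfolding p_def by (simp add: power2_norm_eq_inner)
  qed
  have c1: "eps tp * exp (r tp) \<le> eps t * exp (r t)" if "t \<ge> tp" for t
  proof -
    have "(\<lambda>u. - (eps u * exp (r u))) t \<le> (\<lambda>u. - (eps u * exp (r u))) tp"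
    proof (rule deriv_nonpos_le[OF that])
      fix s assume s: "tp \<le> s" "s \<le> t"
      show "((\<lambda>u. - (eps u * exp (r u))) has_real_derivative - (eps' s * exp (r s) + (exp (r s) * eps s) * eps s)) (at s within {tp..t})"
        by (intro derivative_intros DERIV_mult epsd exp_rd rd[of s t]) (use s tp_ge in auto)
      have "0 \<le> (eps' s + eps s * eps s) * exp (r s)" using cond1[OF s(1)] by (simp add: power2_eq_square)
      then show "- (eps' s * exp (r s) + (exp (r s) * eps s) * eps s) \<le> 0" by (simp add: algebra_simps)
    qed
    then show ?thesis by simp
  qed
  have gdec: "eps' s' + eps s' * eps s' \<le> eps' s + eps s * eps s" if "tp \<le> s" "s \<le> s'" for s s'
  proof (rule deriv_nonpos_le[OF that(2)])
    fix u assume u: "s \<le> u" "u \<le> s'"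
    show "((\<lambda>u. eps' u + eps u * eps u) has_real_derivative eps'' u + (eps' u * eps u + eps' u * eps u)) (at u within {s..s'})"
      by (intro derivative_intros DERIV_mult eps'd epsd) (use u that tp_ge in auto)
    show "eps'' u + (eps' u * eps u + eps' u * eps u) \<le> 0" using cond2[of u] u that by simp
  qed
  define C0 where "C0 = exp (2 * r tp) * (norm (z' tp) ^ 2 / 2 + eps' tp * p tp)"
  have main: "exp (2 * r T) * (norm (z' T) ^ 2 / 2 + eps' T * p T) \<le> C0" if T: "T \<ge> tp" for T
  proof -
    define M where "M = eps tp ^ 2"
    define Bp where "Bp = B ^ 2 / 2"
    define E where "E = exp (2 * r (T + 1))"
    define Kt where "Kt = E * M ^ 2 * Bp"
    define L where "L h s = exp (2 * r (s + h)) * ((norm ((z (s+h) - z s) /\<^sub>R h)) ^ 2 / 2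
       + ((eps (s+h) - eps s) / h) * ((P (s+h) - P s) / h))" for h s
    have key: "L h T \<le> L h tp + h * Kt * (T - tp)" if h: "0 < h" "h \<le> 1" for h
    proof -
      define D where "D s = z (s+h) - z s" for s
      define N where "N s = inner (D s) (D s) / 2" for s
      define dl where "dl s = eps (s+h) - eps s" for s
      define Q where "Q s = P (s+h) - P s" for s
      define psi where "psi s = N s + dl s * Q s" for s
      define Phi where "Phi s = exp (2 * r (s+h)) * psi s - h^3 * Kt * s" for s
      define psi' where "psi' s = inner (z' (s+h) - z' s) (D s) + (eps' (s+h) - eps' s) * Q s + (p (s+h) - p s) * dl s" for s
      define Phi' where "Phi' s = exp (2 * r (s+h)) * (2 * eps (s+h)) * psi s + psi' s * exp (2 * r (s+h)) - h^3 * Kt" for s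
      have "Phi T \<le> Phi tp"
      proof (rule deriv_nonpos_le[OF T, of Phi Phi'])
        fix s assume s: "tp \<le> s" "s \<le> T"
        have img: "(\<lambda>s. s + h) ` {tp..T} \<subseteq> {t0..T+1}" using h tp_ge by auto
        have s0: "t0 \<le> s" "s \<le> T + 1" "t0 \<le> s + h" "s + h \<le> T + 1" using s h tp_ge by auto
        have sub: "{tp..T} \<subseteq> {t0..T+1}" "{tp..T} \<subseteq> {t0..}" "{t0..T+1} \<subseteq> {t0..}" using tp_ge by auto
        have dD: "(D has_vector_derivative z' (s+h) - z' s) (at s within {tp..T})"
          unfolding D_def
          by (intro derivative_intros shift_vd[OF zdS[OF s0(3) sub(3)] img] zdS[OF s0(1) sub(2)])
        have dN: "(N has_real_derivative inner (z' (s+h) - z' s) (D s)) (at s within {tp..T})"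
          unfolding N_def by (rule inner_self_vd[OF dD])
        have ddl: "(dl has_real_derivative eps' (s+h) - eps' s) (at s within {tp..T})"
          unfolding dl_def
          by (intro derivative_intros shift_rd[OF epsd[OF s0(3) sub(3)] img] epsd[OF s0(1) sub(2)])
        have dQ: "(Q has_real_derivative p (s+h) - p s) (at s within {tp..T})"
          unfolding Q_def
          by (intro derivative_intros shift_rd[OF Pd[OF s0(3) s0(4) order_refl] img] Pd[OF s0(1) s0(2) sub(1)])
        have dpsi: "(psi has_real_derivative psi' s) (at s within {tp..T})"
          unfolding psi_def psi'_def
          by (rule DERIV_cong, rule DERIV_add[OF dN DERIV_mult[OF ddl dQ]]) (simp add: algebra_simps)
        have dr: "((\<lambda>s. 2 * r (s + h)) has_real_derivative 2 * eps (s+h)) (at s within {tp..T})"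
          by (intro DERIV_cmult shift_rd[OF rd[OF s0(3) s0(4) order_refl] img])
        have de: "((\<lambda>s. exp (2 * r (s + h))) has_real_derivative exp (2 * r (s+h)) * (2 * eps (s+h))) (at s within {tp..T})"
          by (rule exp_rd[OF dr])
        have dlin: "((\<lambda>s. h^3 * Kt * s) has_real_derivative h^3 * Kt) (at s within {tp..T})"
          by (rule DERIV_cong, rule DERIV_cmult[OF DERIV_ident]) simp
        show "(Phi has_real_derivative Phi' s) (at s within {tp..T})"
          unfolding Phi_def Phi'_def
          by (rule DERIV_diff[OF DERIV_mult[OF de dpsi] dlin])
        show "Phi' s \<le> 0"
        proof -
          have e1pos: "eps (s+h) > 0" using eps_pos s0 by auto
          have dl_le: "dl s \<le> 0" unfolding dl_def using eps_decr[of s "s+h"] s0 h by simp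
          have N_ge: "N s \<ge> 0" unfolding N_def by simp
          have Q_bounds: "0 \<le> Q s \<and> Q s \<le> Bp * h"
          proof -
            have "0 * ((s+h) - s) \<le> P (s+h) - P s \<and> P (s+h) - P s \<le> Bp * ((s+h) - s)"
            proof (rule mvt_bounds)
              fix u assume u: "s \<le> u" "u \<le> s + h"
              show "(P has_real_derivative p u) (at u within {s..s+h})"
                by (rule Pd[of u "s+h"]) (use u s0 in auto)
              show "0 \<le> p u \<and> p u \<le> Bp" using p_nonneg[of u] p_le[of u] u s0 by (simp add: Bp_def)
            qed (use h in simp)
            then show ?thesis unfolding Q_def by simp
          qed
          have dl_lower: "- M * h \<le> dl s"
          proof -
            have "(- M) * ((s+h) - s) \<le> eps (s+h) - eps s"
            proof (rule mvt_lower)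
              fix u assume u: "s \<le> u" "u \<le> s + h"
              show "(eps has_real_derivative eps' u) (at u within {s..s+h})"
                by (rule epsd) (use u s0 in auto)
              have "eps u \<le> eps tp" using eps_decr[of tp u] u s tp_ge by simp
              moreover have "eps u > 0" using eps_pos[of u] u s0 by simp
              ultimately have "eps u ^ 2 \<le> M" unfolding M_def by (simp add: power_mono)
              then show "- M \<le> eps' u" using cond1[of u] u s by simp
            qed (use h in simp)
            then show ?thesis unfolding dl_def by simp
          qed
          have dl2: "dl s ^ 2 \<le> (M * h) ^ 2"
          proof -
            have "(- dl s) ^ 2 \<le> (M * h) ^ 2" using dl_le dl_lower by (intro power_mono) auto
            then show ?thesis by simp
          qed
          have i1: "inner (z' (s+h) - z' s) (D s) = - inner (F (z (s+h)) - F (z s)) (z (s+h) - z s)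
              - eps (s+h) * inner (D s) (D s) - dl s * inner (z s) (D s)"
          proof -
            have "z' (s+h) - z' s = - (F (z (s+h)) - F (z s)) - (eps (s+h) *\<^sub>R D s + dl s *\<^sub>R z s)"
            proof -
              have zq0: "z' s = - F (z s) - eps s *\<^sub>R z s" using zeq[of s] s0 by simp
              have zq1: "z' (s+h) = - F (z (s+h)) - eps (s+h) *\<^sub>R z (s+h)" using zeq[of "s+h"] s0 by simp
              show ?thesis unfolding zq0 zq1 dl_def D_def by (simp add: algebra_simps scaleR_diff_left scaleR_diff_right)
            qed
            then show ?thesis unfolding D_def by (simp add: inner_diff_left inner_add_left)
          qed
          have i2: "p (s+h) = p s + inner (z s) (D s) + N s"
          proof -
            have "p (s+h) = inner (z s + D s) (z s + D s) / 2" unfolding p_def D_def by simp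
            also have "\<dots> = p s + inner (z s) (D s) + N s"
              unfolding p_def N_def by (simp add: inner_add_left inner_add_right inner_commute field_simps)
            finally show ?thesis .
          qed
          have mo: "0 \<le> inner (F (z (s+h)) - F (z s)) (z (s+h) - z s)" by (rule mono)
          have gd: "eps' (s+h) - eps' s \<le> - dl s * (eps (s+h) + eps s)"
          proof -
            have "- dl s * (eps (s+h) + eps s) = eps s * eps s - eps (s+h) * eps (s+h)"
              by (simp add: dl_def algebra_simps)
            then show ?thesis using gdec[of s "s+h"] s h by simp
          qed
          have A1: "(eps' (s+h) - eps' s) * Q s \<le> - dl s * (eps (s+h) + eps s) * Q s"
            using gd Q_bounds by (intro mult_right_mono) auto
          have A2: "dl s * N s \<le> 0" using dl_le N_ge by (simp add: mult_nonpos_nonneg)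
          have id1: "2 * eps (s+h) * psi s + psi' s = 2 * eps (s+h) * dl s * Q s
              - inner (F (z (s+h)) - F (z s)) (z (s+h) - z s) + dl s * N s + (eps' (s+h) - eps' s) * Q s"
            unfolding psi_def psi'_def i1 i2 N_def by (simp add: algebra_simps)
          have id2: "2 * eps (s+h) * dl s * Q s - dl s * (eps (s+h) + eps s) * Q s = dl s ^ 2 * Q s"
            by (simp add: dl_def power2_eq_square algebra_simps)
          have X: "2 * eps (s+h) * psi s + psi' s \<le> dl s ^ 2 * Q s"
            using id1 id2 A1 A2 mo by linarith
          have Y: "dl s ^ 2 * Q s \<le> (M * h) ^ 2 * (Bp * h)"
            using dl2 Q_bounds by (intro mult_mono) auto
          have e_le: "exp (2 * r (s+h)) \<le> E"
            unfolding E_def using r_mono[of "s+h" "T+1"] s0 by simp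
          have Z: "(M * h) ^ 2 * (Bp * h) \<ge> 0" unfolding Bp_def using h by simp
          have "Phi' s = exp (2 * r (s+h)) * (2 * eps (s+h) * psi s + psi' s) - h^3 * Kt"
            unfolding Phi'_def by (simp add: algebra_simps)
          also have "\<dots> \<le> exp (2 * r (s+h)) * ((M * h) ^ 2 * (Bp * h)) - h^3 * Kt"
            using X Y by (intro diff_right_mono mult_left_mono) auto
          also have "\<dots> \<le> E * ((M * h) ^ 2 * (Bp * h)) - h^3 * Kt"
            using e_le Z by (intro diff_right_mono mult_right_mono) auto
          also have "\<dots> = 0" unfolding Kt_def by (simp add: power2_eq_square power3_eq_cube algebra_simps)
          finally show ?thesis .
        qed
      qed
      have Leq: "L h s = exp (2 * r (s+h)) * psi s / h^2" for s
      proof -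
        have "norm ((z (s+h) - z s) /\<^sub>R h) ^ 2 = inner (D s) (D s) / h^2"
          by (simp add: D_def power2_norm_eq_inner[symmetric] power_mult_distrib power_inverse divide_inverse)
        then show ?thesis unfolding L_def psi_def N_def dl_def Q_def using h
          by (simp add: field_simps power2_eq_square)
      qed
      have "exp (2 * r (T+h)) * psi T \<le> exp (2 * r (tp+h)) * psi tp + h^3 * Kt * (T - tp)"
        using \<open>Phi T \<le> Phi tp\<close> by (simp add: Phi_def algebra_simps)
      then have "exp (2 * r (T+h)) * psi T / h^2 \<le> (exp (2 * r (tp+h)) * psi tp + h^3 * Kt * (T - tp)) / h^2"
        by (rule divide_right_mono) simp
      also have "\<dots> = exp (2 * r (tp+h)) * psi tp / h^2 + h * Kt * (T - tp)"
        using h by (simp add: field_simps power2_eq_square power3_eq_cube)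
      finally show ?thesis by (simp add: Leq)
    qed
    have Llim: "((\<lambda>h. L h s) \<longlongrightarrow> exp (2 * r s) * (norm (z' s) ^ 2 / 2 + eps' s * p s)) (at_right 0)"
      if "t0 \<le> s" for s
    proof -
      have q1: "((\<lambda>h. (z (s+h) - z s) /\<^sub>R h) \<longlongrightarrow> z' s) (at_right 0)"
        by (rule vd_quot[OF zdS[of s "{s..s+1}"]]) (use that in auto)
      have q2: "((\<lambda>h. (eps (s+h) - eps s) / h) \<longlongrightarrow> eps' s) (at_right 0)"
        by (rule rd_quot[OF epsd[of s "{s..s+1}"]]) (use that in auto)
      have q3: "((\<lambda>h. (P (s+h) - P s) / h) \<longlongrightarrow> p s) (at_right 0)"
        by (rule rd_quot[OF Pd[of s "s+1" "{s..s+1}"]]) (use that in auto)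
      have "(r has_real_derivative eps s) (at s within {s..s+1})"
        by (rule rd[of s "s+1"]) (use that in auto)
      then have q4: "((\<lambda>h. r (s+h)) \<longlongrightarrow> r s) (at_right 0)"
        by (intro vd_cont_right[of r "eps s" s "s+1"]) (auto simp: has_real_derivative_iff_has_vector_derivative)
      show ?thesis unfolding L_def by (intro tendsto_intros q1 q2 q3 q4) auto
    qed
    have R: "((\<lambda>h. L h tp + h * Kt * (T - tp)) \<longlongrightarrow> C0 + 0 * Kt * (T - tp)) (at_right 0)"
      unfolding C0_def by (intro tendsto_intros Llim tp_ge)
    have ev: "eventually (\<lambda>h. L h T \<le> L h tp + h * Kt * (T - tp)) (at_right 0)"
      by (rule eventually_at_rightI[of 0 1]) (auto intro: key)
    have "exp (2 * r T) * (norm (z' T) ^ 2 / 2 + eps' T * p T) \<le> C0 + 0 * Kt * (T - tp)"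
      by (rule tendsto_le[OF trivial_limit_at_right_real R Llim ev]) (use T tp_ge in auto)
    then show ?thesis by simp
  qed
  define c1 where "c1 = eps tp * exp (r tp)"
  have c1pos: "c1 > 0" unfolding c1_def using eps_pos[OF tp_ge] by simp
  define K where "K = 2 * (max C0 0 / c1^2 + B^2/2)"
  have K0: "K \<ge> 0" unfolding K_def using c1pos by simp
  have zb: "norm (z' T) ^ 2 \<le> K * eps T ^ 2" if T: "T \<ge> tp" for T
  proof -
    have T0: "T \<ge> t0" using T tp_ge by simp
    have eT: "eps T > 0" using eps_pos[OF T0] .
    have i1: "1 / exp (r T) \<le> eps T / c1"
      using c1[OF T] c1pos eT unfolding c1_def[symmetric] by (simp add: divide_simps mult.commute)
    have i2: "(1 / exp (r T)) ^ 2 \<le> (eps T / c1) ^ 2"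
      using i1 by (intro power_mono) auto
    have m1: "norm (z' T) ^ 2 / 2 + eps' T * p T \<le> C0 / exp (2 * r T)"
      using main[OF T] by (subst pos_le_divide_eq) (simp_all add: mult.commute)
    have "C0 / exp (2 * r T) = C0 * (1 / exp (r T)) ^ 2"
    proof -
      have "exp (2 * r T) = exp (r T) ^ 2" by (metis exp_double power2_eq_square)
      then show ?thesis by (simp add: power_divide)
    qed
    also have "\<dots> \<le> max C0 0 * (1 / exp (r T)) ^ 2"
      by (intro mult_right_mono) auto
    also have "\<dots> \<le> max C0 0 * (eps T / c1) ^ 2"
      using i2 by (intro mult_left_mono) auto
    also have "\<dots> = max C0 0 / c1 ^ 2 * eps T ^ 2" by (simp add: power_divide)
    finally have m2: "C0 / exp (2 * r T) \<le> max C0 0 / c1 ^ 2 * eps T ^ 2" .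
    have "- eps' T * p T \<le> eps T ^ 2 * p T"
      using cond1[OF T] p_nonneg[of T] by (intro mult_right_mono) auto
    also have "\<dots> \<le> eps T ^ 2 * (B^2 / 2)"
      using p_le[OF T0] by (intro mult_left_mono) auto
    finally have m3: "- eps' T * p T \<le> eps T ^ 2 * (B^2 / 2)" .
    have "K * eps T ^ 2 = 2 * (max C0 0 / c1 ^ 2 * eps T ^ 2) + 2 * (eps T ^ 2 * (B^2 / 2))"
      unfolding K_def by (simp add: algebra_simps)
    then show ?thesis using m1 m2 m3 by linarith
  qed
  have fin: "exp (- r t) * integral {tp..t} (\<lambda>\<tau>. exp (r \<tau>) * (1 / eps \<tau>) * (norm (z' \<tau>))\<^sup>2) \<le> K"
    if t: "t \<ge> tp" for t
  proof -
    have sub: "{tp..t} \<subseteq> {t0..}" using tp_ge by auto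
    have r_cont: "continuous_on {tp..t} r"
    proof -
      have "continuous (at s within {tp..t}) r" if "s \<in> {tp..t}" for s
        using rd[of s t "{tp..t}"] that tp_ge DERIV_continuous by auto
      then show ?thesis using continuous_on_eq_continuous_within by blast
    qed
    have z'_cont: "continuous_on {tp..t} z'"
      unfolding z'_def
      by (intro continuous_on_Pair continuous_on_subset[OF x'_cont sub] continuous_on_subset[OF lam'_cont sub])
    have g_cont: "continuous_on {tp..t} (\<lambda>\<tau>. exp (r \<tau>) * (1 / eps \<tau>) * (norm (z' \<tau>))\<^sup>2)"
    proof -
      have ne: "\<And>\<tau>. \<tau> \<in> {tp..t} \<Longrightarrow> eps \<tau> \<noteq> 0" using eps_pos tp_ge by (metis atLeastAtMost_iff order_trans less_irrefl)
      show ?thesis using ne by (intro continuous_intros r_cont z'_cont continuous_on_subset[OF eps_cont sub]) blast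
    qed
    have fd: "((\<lambda>\<tau>. K * exp (r \<tau>)) has_vector_derivative K * (exp (r \<tau>) * eps \<tau>)) (at \<tau> within {tp..t})"
      if "\<tau> \<in> {tp..t}" for \<tau>
      unfolding has_real_derivative_iff_has_vector_derivative[symmetric]
      by (intro DERIV_cmult exp_rd rd[of \<tau> t]) (use that tp_ge in auto)
    have hi: "((\<lambda>\<tau>. K * (exp (r \<tau>) * eps \<tau>)) has_integral (K * exp (r t) - K * exp (r tp))) {tp..t}"
      by (rule fundamental_theorem_of_calculus[OF t fd])
    have "integral {tp..t} (\<lambda>\<tau>. exp (r \<tau>) * (1 / eps \<tau>) * (norm (z' \<tau>))\<^sup>2)
        \<le> integral {tp..t} (\<lambda>\<tau>. K * (exp (r \<tau>) * eps \<tau>))"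
    proof (rule integral_le)
      show "(\<lambda>\<tau>. exp (r \<tau>) * (1 / eps \<tau>) * (norm (z' \<tau>))\<^sup>2) integrable_on {tp..t}"
        by (rule integrable_continuous_interval[OF g_cont])
      show "(\<lambda>\<tau>. K * (exp (r \<tau>) * eps \<tau>)) integrable_on {tp..t}"
        using hi by blast
      fix \<tau> assume "\<tau> \<in> {tp..t}"
      then have \<tau>: "\<tau> \<ge> tp" "\<tau> \<ge> t0" using tp_ge by auto
      have ep: "eps \<tau> > 0" using eps_pos[OF \<tau>(2)] .
      have "exp (r \<tau>) * (1 / eps \<tau>) * (norm (z' \<tau>))\<^sup>2 \<le> exp (r \<tau>) * (1 / eps \<tau>) * (K * eps \<tau> ^ 2)"
        using zb[OF \<tau>(1)] ep by (intro mult_left_mono) auto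
      also have "\<dots> = K * (exp (r \<tau>) * eps \<tau>)" using ep by (simp add: power2_eq_square field_simps)
      finally show "exp (r \<tau>) * (1 / eps \<tau>) * (norm (z' \<tau>))\<^sup>2 \<le> K * (exp (r \<tau>) * eps \<tau>)" .
    qed
    also have "\<dots> = K * exp (r t) - K * exp (r tp)" using hi by (rule integral_unique)
    also have "\<dots> \<le> K * exp (r t)" using K0 by simp
    finally have "exp (- r t) * integral {tp..t} (\<lambda>\<tau>. exp (r \<tau>) * (1 / eps \<tau>) * (norm (z' \<tau>))\<^sup>2)
        \<le> exp (- r t) * (K * exp (r t))" by (intro mult_left_mono) auto
    also have "\<dots> = K" by (simp add: exp_minus field_simps)
    finally show ?thesis .
  qed
  have "Limsup at_top (\<lambda>t::real. ereal (exp (- rho eps t0 t) *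
            integral {tp..t} (\<lambda>\<tau>. exp (rho eps t0 \<tau>) * (1 / eps \<tau>) * (norm (x' \<tau>, lam' \<tau>))\<^sup>2))) \<le> ereal K"
  proof (rule Limsup_bounded)
    show "\<forall>\<^sub>F t in at_top. ereal (exp (- rho eps t0 t) *
            integral {tp..t} (\<lambda>\<tau>. exp (rho eps t0 \<tau>) * (1 / eps \<tau>) * (norm (x' \<tau>, lam' \<tau>))\<^sup>2)) \<le> ereal K"
    proof (rule eventually_at_top_linorderI[of tp])
      fix t assume "tp \<le> t"
      from fin[OF this] show "ereal (exp (- rho eps t0 t) *
            integral {tp..t} (\<lambda>\<tau>. exp (rho eps t0 \<tau>) * (1 / eps \<tau>) * (norm (x' \<tau>, lam' \<tau>))\<^sup>2)) \<le> ereal K"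
        unfolding r_def z'_def by simp
    qed
  qed
  moreover have "ereal K < \<infinity>" by simp
  ultimately show ?thesis by (rule order.strict_trans1)
qed

end
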